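(* Let $n\ge 2$ and let $\mathcal{P}^c(Q_{4n})$ be the conjugacy super power graph of the generalized quaternion group $Q_{4n}$. (i) If $n$ is even, then $-(n+1)\sqrt2$ is an eigenvalue of the Sombor matrix of $\mathcal{P}^c(Q_{4n})$ with multiplicity at least $2n-2$. (ii) If $n$ is odd, then $-(2n+1)\sqrt2$ is an eigenvalue of the Sombor matrix of $\mathcal{P}^c(Q_{4n})$ with multiplicity at least $2n-1$.
   Context: For a finite simple graph $\Gamma$ with vertices $u_1,\dots,u_N$, the Sombor matrix $S(\Gamma)$ has $(i,j)$ entry $\sqrt{\deg(u_i)^2+\deg(u_j)^2}$ if $u_i,u_j$ are adjacent and $0$ otherwise. $Q_{4n}=\langle a,b: a^{2n}=e,\ a^n=b^2,\ ba=a^{-1}b\rangle$. The power graph $\mathcal{P}(G)$ has vertex set $G$, distinct $x,y$ adjacent iff $x\in\langle y\rangle$ or $y\in\langle x\rangle$. The conjugacy super power graph $\mathcal{P}^c(G)$ has vertex set $G$, and distinct $g,h$ are adjacent iff $g,h$ are conjugate in $G$ or there exist $g'$ conjugate to $g$ and $h'$ conjugate to $h$ that are adjacent in $\mathcal{P}(G)$. *)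

theory Defs
  imports "HOL-Algebra.Group" "HOL-Algebra.Generated_Groups" "Jordan_Normal_Form.Char_Poly"
begin

text \<open>Concrete model of the generalized quaternion group
  Q_{4n} = < a, b | a^(2n) = e, a^n = b^2, b a = a^(-1) b >.
  The pair (i, j) with i < 2n, j < 2 stands for the element a^i b^j.\<close>

definition quat_mult :: "nat \<Rightarrow> nat \<times> nat \<Rightarrow> nat \<times> nat \<Rightarrow> nat \<times> nat" where
  "quat_mult n x y = (case x of (i, j) \<Rightarrow> case y of (k, l) \<Rightarrow>
     if j = 0 then ((i + k) mod (2 * n), l)
     else if l = 0 then ((i + 2 * n - k) mod (2 * n), 1)
     else ((i + 2 * n - k + n) mod (2 * n), 0))"

definition Q :: "nat \<Rightarrow> (nat \<times> nat) monoid" where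
  "Q n = \<lparr> carrier = {0..<2 * n} \<times> {0..<2}, monoid.mult = quat_mult n, one = (0, 0) \<rparr>"

definition power_adj :: "('a, 'b) monoid_scheme \<Rightarrow> 'a \<Rightarrow> 'a \<Rightarrow> bool" where
  "power_adj G x y \<longleftrightarrow> x \<in> carrier G \<and> y \<in> carrier G \<and> x \<noteq> y \<and>
     (x \<in> generate G {y} \<or> y \<in> generate G {x})"

definition conjugate :: "('a, 'b) monoid_scheme \<Rightarrow> 'a \<Rightarrow> 'a \<Rightarrow> bool" where
  "conjugate G g h \<longleftrightarrow> g \<in> carrier G \<and> h \<in> carrier G \<and>
     (\<exists>x\<in>carrier G. h = x \<otimes>\<^bsub>G\<^esub> g \<otimes>\<^bsub>G\<^esub> inv\<^bsub>G\<^esub> x)"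

definition csp_adj :: "('a, 'b) monoid_scheme \<Rightarrow> 'a \<Rightarrow> 'a \<Rightarrow> bool" where
  "csp_adj G g h \<longleftrightarrow> g \<in> carrier G \<and> h \<in> carrier G \<and> g \<noteq> h \<and>
     (conjugate G g h \<or>
      (\<exists>g' h'. conjugate G g g' \<and> conjugate G h h' \<and> power_adj G g' h'))"

definition graph_deg :: "'a set \<Rightarrow> ('a \<Rightarrow> 'a \<Rightarrow> bool) \<Rightarrow> 'a \<Rightarrow> nat" where
  "graph_deg V E v = card {w \<in> V. E v w}"

definition sombor_matrix :: "'a set \<Rightarrow> ('a \<Rightarrow> 'a \<Rightarrow> bool) \<Rightarrow> nat \<Rightarrow> (nat \<Rightarrow> 'a) \<Rightarrow> real mat" where
  "sombor_matrix V E N u = mat N N (\<lambda>(i, j).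
     if E (u i) (u j)
     then sqrt (real (graph_deg V E (u i)) ^ 2 + real (graph_deg V E (u j)) ^ 2)
     else 0)"

end

theory Submission
  imports Defs
begin

lemma rows_factor_dvd:
  fixes M :: "'a::comm_ring_1 mat"
  assumes M: "M \<in> carrier_mat N N" and R: "R \<subseteq> {..<N}"
  and p: "\<And>i. i\<in>R \<Longrightarrow> p i < i \<and> p i \<notin> R"
  and rows: "\<And>i j. i\<in>R \<Longrightarrow> j<N \<Longrightarrow> M$$(i,j) = M$$(p i, j) + c * ((if j = i then 1 else 0) - (if j = p i then 1 else 0))"
  shows "c ^ card R dvd det M"
proof -
  define E :: "'a mat" where "E = mat N N (\<lambda>(i,k). if i\<in>R then c*(if k = i then 1 else 0) + (if k = p i then 1 else 0) else (if k = i then 1 else 0))"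
  define M' :: "'a mat" where "M' = mat N N (\<lambda>(i,j). if i\<in>R then (if j = i then 1 else 0) - (if j = p i then 1 else 0) else M$$(i,j))"
  have E: "E \<in> carrier_mat N N" and M'c: "M' \<in> carrier_mat N N" unfolding E_def M'_def by auto
  have eq: "M = E * M'"
  proof (rule eq_matI)
    fix i j assume i: "i < dim_row (E * M')" and j: "j < dim_col (E * M')"
    hence iN: "i < N" and jN: "j < N" using E M'c by auto
    have "(E * M') $$ (i,j) = (\<Sum>k\<in>{0..<N}. E $$ (i,k) * M' $$ (k,j))"
      using iN jN E M'c by (auto simp: scalar_prod_def)
    also have "\<dots> = M $$ (i,j)"
    proof (cases "i \<in> R")
      case True
      have pN: "p i < N" using p[OF True] iN by auto
      have "(\<Sum>k\<in>{0..<N}. E $$ (i,k) * M' $$ (k,j)) =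
         (\<Sum>k\<in>{0..<N}. c * (if k = i then M' $$ (k,j) else 0) + (if k = p i then M' $$ (k,j) else 0))"
        by (rule sum.cong, auto simp: E_def iN True distrib_right)
      also have "\<dots> = c * M' $$ (i,j) + M' $$ (p i, j)"
        by (simp add: sum.distrib sum_distrib_left[symmetric] iN pN)
      also have "\<dots> = M $$ (i,j)"
        using p[OF True] pN iN jN True by (simp add: M'_def rows[OF True jN] algebra_simps)
      finally show ?thesis .
    next
      case False
      have "(\<Sum>k\<in>{0..<N}. E $$ (i,k) * M' $$ (k,j)) = (\<Sum>k\<in>{0..<N}. if k = i then M' $$ (k,j) else 0)"
        by (rule sum.cong, auto simp: E_def iN False)
      also have "\<dots> = M $$ (i,j)" using iN jN False by (simp add: M'_def)
      finally show ?thesis .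
    qed
    finally show "M $$ (i,j) = (E * M') $$ (i,j)" by simp
  qed (insert M E M'c, auto)
  have "det E = (\<Prod>i\<in>{0..<N}. E $$ (i,i))"
    by (subst det_lower_triangular[OF _ E], auto simp: E_def prod_list_diag_prod dest: p)
  also have "\<dots> = (\<Prod>i\<in>{0..<N}. if i \<in> R then c else 1)"
    by (rule prod.cong, auto simp: E_def dest: p)
  also have "\<dots> = c ^ card R"
    using R by (simp add: prod.If_cases Int_absorb1 lessThan_atLeast0)
  finally have "det M = c ^ card R * det M'" using eq det_mult[OF E M'c] by simp
  thus ?thesis by simp
qed


lemma char_poly_factor_dvd:
  fixes A :: "'a::comm_ring_1 mat"
  assumes A: "A \<in> carrier_mat N N" and R: "R \<subseteq> {..<N}"
  and p: "\<And>i. i\<in>R \<Longrightarrow> p i < i \<and> p i \<notin> R"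
  and d1: "\<And>i. i\<in>R \<Longrightarrow> A$$(i,i) = 0 \<and> A$$(p i, p i) = 0 \<and> A$$(i,p i) = w \<and> A$$(p i, i) = w"
  and tw: "\<And>i j. i\<in>R \<Longrightarrow> j<N \<Longrightarrow> j \<noteq> i \<Longrightarrow> j \<noteq> p i \<Longrightarrow> A$$(i,j) = A$$(p i, j)"
  shows "[:w,1:] ^ card R dvd char_poly A"
  unfolding char_poly_def
proof (rule rows_factor_dvd[OF char_poly_matrix_closed[OF A] R p])
  fix i j assume i: "i \<in> R" and j: "j < N"
  have iN: "i < N" using i R by auto
  have pN: "p i < N" using p[OF i] iN by auto
  have ne: "p i \<noteq> i" using p[OF i] by auto
  show "char_poly_matrix A $$ (i, j) = char_poly_matrix A $$ (p i, j) +
      [:w, 1:] * ((if j = i then 1 else 0) - (if j = p i then 1 else 0))"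
    using A iN pN j d1[OF i] tw[OF i j] ne
    by (auto simp: char_poly_matrix_def algebra_simps)
qed (auto)


definition twin_clique :: "'a set \<Rightarrow> ('a \<Rightarrow> 'a \<Rightarrow> bool) \<Rightarrow> 'a set \<Rightarrow> bool" where
  "twin_clique V E C \<longleftrightarrow> C \<subseteq> V \<and> (\<forall>x\<in>C. \<not> E x x) \<and> (\<forall>x\<in>C. \<forall>x'\<in>C. x \<noteq> x' \<longrightarrow> E x x') \<and>
     (\<forall>x\<in>C. \<forall>x'\<in>C. \<forall>y. y \<noteq> x \<longrightarrow> y \<noteq> x' \<longrightarrow> (E x y \<longleftrightarrow> E x' y))"

lemma twin_cliqueD:
  assumes "twin_clique V E C"
  shows "x \<in> C \<Longrightarrow> \<not> E x x"
    and "x \<in> C \<Longrightarrow> x' \<in> C \<Longrightarrow> x \<noteq> x' \<Longrightarrow> E x x'"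
    and "x \<in> C \<Longrightarrow> x' \<in> C \<Longrightarrow> y \<noteq> x \<Longrightarrow> y \<noteq> x' \<Longrightarrow> E x y = E x' y"
  using assms unfolding twin_clique_def by blast+

lemma two_cliques:
  assumes u: "bij_betw u {0..<N} V"
  and C1: "twin_clique V E C1" and C2: "twin_clique V E C2" and disj: "C1 \<inter> C2 = {}"
  and deg: "\<And>x. x \<in> C1 \<union> C2 \<Longrightarrow> graph_deg V E x = d"
  shows "[: sqrt (real d ^ 2 + real d ^ 2), 1:] ^ (card C1 - 1 + (card C2 - 1)) dvd char_poly (sombor_matrix V E N u)"
proof -
  let ?w = "sqrt (real d ^ 2 + real d ^ 2)"
  define I1 where "I1 = {i \<in> {0..<N}. u i \<in> C1}"
  define I2 where "I2 = {i \<in> {0..<N}. u i \<in> C2}"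
  define m1 where "m1 = Min I1"
  define m2 where "m2 = Min I2"
  define R where "R = (I1 - {m1}) \<union> (I2 - {m2})"
  define p where "p i = (if u i \<in> C1 then m1 else m2)" for i
  have inj: "inj_on u {0..<N}" using u by (auto simp: bij_betw_def)
  have fin1: "finite I1" "finite I2" unfolding I1_def I2_def by auto
  have cardI1: "card I1 = card C1"
  proof -
    have sub: "C1 \<subseteq> V" using C1 unfolding twin_clique_def by blast
    have im: "u ` {0..<N} = V" using u by (simp add: bij_betw_def)
    have "u ` I1 = C1"
    proof
      show "u ` I1 \<subseteq> C1" unfolding I1_def by blast
      show "C1 \<subseteq> u ` I1"
      proof
        fix x assume x: "x \<in> C1"
        then obtain i where "i \<in> {0..<N}" "x = u i" using sub im by blast
        then show "x \<in> u ` I1" using x unfolding I1_def by blast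
      qed
    qed
    moreover have "inj_on u I1" using inj unfolding I1_def by (rule inj_on_subset) blast
    ultimately show ?thesis by (metis card_image)
  qed
  have cardI2: "card I2 = card C2"
  proof -
    have sub: "C2 \<subseteq> V" using C2 unfolding twin_clique_def by blast
    have im: "u ` {0..<N} = V" using u by (simp add: bij_betw_def)
    have "u ` I2 = C2"
    proof
      show "u ` I2 \<subseteq> C2" unfolding I2_def by blast
      show "C2 \<subseteq> u ` I2"
      proof
        fix x assume x: "x \<in> C2"
        then obtain i where "i \<in> {0..<N}" "x = u i" using sub im by blast
        then show "x \<in> u ` I2" using x unfolding I2_def by blast
      qed
    qed
    moreover have "inj_on u I2" using inj unfolding I2_def by (rule inj_on_subset) blast
    ultimately show ?thesis by (metis card_image)
  qed
  have dj: "I1 \<inter> I2 = {}" using disj unfolding I1_def I2_def by auto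
  have cR1: "card (I1 - {m1}) = card C1 - 1"
  proof (cases "I1 = {}")
    case True thus ?thesis using cardI1 by simp
  next
    case False thus ?thesis using cardI1 fin1 unfolding m1_def by simp
  qed
  have cR2: "card (I2 - {m2}) = card C2 - 1"
  proof (cases "I2 = {}")
    case True thus ?thesis using cardI2 by simp
  next
    case False thus ?thesis using cardI2 fin1 unfolding m2_def by simp
  qed
  have cardR: "card R = card C1 - 1 + (card C2 - 1)"
    unfolding R_def using cR1 cR2 dj fin1 by (subst card_Un_disjoint) auto
  have RN: "R \<subseteq> {..<N}" unfolding R_def I1_def I2_def by auto
  have p: "p i < i \<and> p i \<notin> R" if i: "i \<in> R" for i
  proof (cases "i \<in> I1")
    case True
    hence "m1 \<in> I1" "m1 \<le> i" unfolding m1_def using Min_in[OF fin1(1)] Min_le[OF fin1(1)] by blast+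
    moreover have "m1 \<noteq> i" using i True dj unfolding R_def by auto
    moreover have "u i \<in> C1" using True unfolding I1_def by auto
    ultimately show ?thesis using dj unfolding p_def R_def by auto
  next
    case False
    hence T: "i \<in> I2" using i unfolding R_def by auto
    hence "m2 \<in> I2" "m2 \<le> i" unfolding m2_def using Min_in[OF fin1(2)] Min_le[OF fin1(2)] by blast+
    moreover have "m2 \<noteq> i" using i T dj unfolding R_def by auto
    moreover have "u i \<notin> C1" using T disj unfolding I2_def by auto
    ultimately show ?thesis using dj unfolding p_def R_def by auto
  qed
  have same: "p i \<in> I1 \<and> i \<in> I1 \<or> p i \<in> I2 \<and> i \<in> I2" if i: "i \<in> R" for i
  proof (cases "i \<in> I1")
    case True
    hence "m1 \<in> I1" unfolding m1_def using Min_in[OF fin1(1)] by blast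
    moreover have "u i \<in> C1" using True unfolding I1_def by auto
    ultimately show ?thesis using True unfolding p_def by auto
  next
    case False
    hence T: "i \<in> I2" using i unfolding R_def by auto
    hence "m2 \<in> I2" unfolding m2_def using Min_in[OF fin1(2)] by blast
    moreover have "u i \<notin> C1" using T disj unfolding I2_def by auto
    ultimately show ?thesis using T unfolding p_def by auto
  qed
  define S where "S = sombor_matrix V E N u"
  have S: "S \<in> carrier_mat N N" unfolding S_def sombor_matrix_def by auto
  have Sij: "S $$ (i,j) = (if E (u i) (u j) then sqrt (real (graph_deg V E (u i)) ^ 2 + real (graph_deg V E (u j)) ^ 2) else 0)"
    if "i < N" "j < N" for i j using that unfolding S_def sombor_matrix_def by simp
  have main: "[:?w, 1:] ^ card R dvd char_poly S"
  proof (rule char_poly_factor_dvd[OF S RN p])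
    fix i assume i: "i \<in> R"
    from same[OF i] have "\<exists>C \<in> {C1,C2}. u i \<in> C \<and> u (p i) \<in> C" unfolding I1_def I2_def by blast
    then obtain C where C0: "C \<in> {C1,C2}" "u i \<in> C" "u (p i) \<in> C" by blast
    have Ct: "twin_clique V E C" using C0(1) C1 C2 by auto
    have C: "twin_clique V E C" "u i \<in> C" "u (p i) \<in> C" "C \<subseteq> C1 \<union> C2"
      using Ct C0 by auto
    have iN: "i < N" "p i < N" using i RN p[OF i] by auto
    have ne: "u i \<noteq> u (p i)"
    proof
      assume "u i = u (p i)"
      hence "i = p i" using inj iN by (intro inj_onD[of u "{0..<N}"]) auto
      thus False using p[OF i] by simp
    qed
    have dd: "graph_deg V E (u i) = d" "graph_deg V E (u (p i)) = d" using deg C by auto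
    show "S $$ (i, i) = 0 \<and> S $$ (p i, p i) = 0 \<and> S $$ (i, p i) = ?w \<and> S $$ (p i, i) = ?w"
    proof -
      have e: "\<not> E (u i) (u i)" "\<not> E (u (p i)) (u (p i))" "E (u i) (u (p i))" "E (u (p i)) (u i)"
        using twin_cliqueD(1,2)[OF C(1)] C(2,3) ne by auto
      show ?thesis using e dd iN by (simp add: Sij)
    qed
  next
    fix i j assume i: "i \<in> R" and j: "j < N" "j \<noteq> i" "j \<noteq> p i"
    from same[OF i] have "\<exists>C \<in> {C1,C2}. u i \<in> C \<and> u (p i) \<in> C" unfolding I1_def I2_def by blast
    then obtain C where C0: "C \<in> {C1,C2}" "u i \<in> C" "u (p i) \<in> C" by blast
    have Ct: "twin_clique V E C" using C0(1) C1 C2 by auto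
    have C: "twin_clique V E C" "u i \<in> C" "u (p i) \<in> C" "C \<subseteq> C1 \<union> C2"
      using Ct C0 by auto
    have iN: "i < N" "p i < N" using i RN p[OF i] by auto
    have ne1: "u j \<noteq> u i"
    proof
      assume "u j = u i"
      hence "j = i" using inj iN j by (intro inj_onD[of u "{0..<N}"]) auto
      thus False using j by simp
    qed
    have ne2: "u j \<noteq> u (p i)"
    proof
      assume "u j = u (p i)"
      hence "j = p i" using inj iN j by (intro inj_onD[of u "{0..<N}"]) auto
      thus False using j by simp
    qed
    note ne = ne1 ne2
    have dd: "graph_deg V E (u i) = d" "graph_deg V E (u (p i)) = d" using deg C by auto
    have "E (u i) (u j) = E (u (p i)) (u j)" using twin_cliqueD(3)[OF C(1) C(2,3) ne] by simp
    then show "S $$ (i, j) = S $$ (p i, j)" using iN j dd by (simp add: Sij)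
  qed
  then show ?thesis unfolding S_def cardR .
qed

lemma mod_2m: "(a::nat) < 2*m \<Longrightarrow> a mod m = (if a < m then a else a - m)"
  by (cases "a < m") (simp_all add: le_mod_geq)

lemma mod_3m: "(a::nat) < 3*m \<Longrightarrow> a mod m = (if a < m then a else if a < 2*m then a - m else a - 2*m)"
  by (cases "a < m"; cases "a < 2*m") (simp_all add: le_mod_geq)

lemma dvd_2m: "(a::nat) < 2*m \<Longrightarrow> m dvd a \<longleftrightarrow> a = 0 \<or> a = m"
proof
  assume a: "a < 2*m" "m dvd a"
  then obtain q where q: "a = m*q" by (auto elim!: dvdE)
  with a have "m*q < m*2" by simp
  hence "q < 2" by (simp add: mult_less_cancel1)
  hence "q = 0 \<or> q = 1" by auto
  thus "a = 0 \<or> a = m" using q by auto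
qed auto

lemma dvd_3m: "(a::nat) < 3*m \<Longrightarrow> m dvd a \<longleftrightarrow> a = 0 \<or> a = m \<or> a = 2*m"
proof
  assume a: "a < 3*m" "m dvd a"
  then obtain q where q: "a = m*q" by (auto elim!: dvdE)
  with a have "m*q < m*3" by simp
  hence "q < 3" by (simp add: mult_less_cancel1)
  hence "q = 0 \<or> q = 1 \<or> q = 2" by auto
  thus "a = 0 \<or> a = m \<or> a = 2*m" using q by auto
qed auto

lemma carrier_Q: "x \<in> carrier (Q n) \<longleftrightarrow> fst x < 2*n \<and> snd x < 2"
  by (cases x) (auto simp: Q_def)
lemma mult_Q: "x \<otimes>\<^bsub>Q n\<^esub> y = quat_mult n x y" by (simp add: Q_def)
lemma one_Q: "\<one>\<^bsub>Q n\<^esub> = (0,0)" by (simp add: Q_def)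

lemma inv_Q0: assumes "k < 2*n" shows "inv\<^bsub>Q n\<^esub> (k,0) = ((2*n-k) mod (2*n), 0)"
  unfolding m_inv_def
proof (rule the_equality)
  show "((2*n-k) mod (2*n), 0) \<in> carrier (Q n) \<and> (k, 0) \<otimes>\<^bsub>Q n\<^esub> ((2*n-k) mod (2*n), 0) = \<one>\<^bsub>Q n\<^esub> \<and>
    ((2*n-k) mod (2*n), 0) \<otimes>\<^bsub>Q n\<^esub> (k, 0) = \<one>\<^bsub>Q n\<^esub>"
    using assms by (auto simp: carrier_Q mult_Q one_Q quat_mult_def mod_2m)
  fix y assume "y \<in> carrier (Q n) \<and> (k, 0) \<otimes>\<^bsub>Q n\<^esub> y = \<one>\<^bsub>Q n\<^esub> \<and> y \<otimes>\<^bsub>Q n\<^esub> (k, 0) = \<one>\<^bsub>Q n\<^esub>"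
  then show "y = ((2*n-k) mod (2*n), 0)"
    using assms by (cases y) (auto simp: carrier_Q mult_Q one_Q quat_mult_def mod_2m dvd_2m split: if_splits)
qed

lemma inv_Q1: assumes "k < 2*n" shows "inv\<^bsub>Q n\<^esub> (k,1) = ((k+n) mod (2*n), 1)"
  unfolding m_inv_def
proof (rule the_equality)
  show "((k+n) mod (2*n), 1) \<in> carrier (Q n) \<and> (k, 1) \<otimes>\<^bsub>Q n\<^esub> ((k+n) mod (2*n), 1) = \<one>\<^bsub>Q n\<^esub> \<and>
    ((k+n) mod (2*n), 1) \<otimes>\<^bsub>Q n\<^esub> (k, 1) = \<one>\<^bsub>Q n\<^esub>"
    using assms by (auto simp: carrier_Q mult_Q one_Q quat_mult_def mod_2m mod_3m)
  fix y assume "y \<in> carrier (Q n) \<and> (k, 1) \<otimes>\<^bsub>Q n\<^esub> y = \<one>\<^bsub>Q n\<^esub> \<and> y \<otimes>\<^bsub>Q n\<^esub> (k, 1) = \<one>\<^bsub>Q n\<^esub>"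
  then show "y = ((k+n) mod (2*n), 1)"
    using assms by (cases y) (auto simp: carrier_Q mult_Q one_Q quat_mult_def mod_2m mod_3m dvd_2m dvd_3m split: if_splits)
qed


lemma inv_Q1s: "k < 2*n \<Longrightarrow> inv\<^bsub>Q n\<^esub> (k, Suc 0) = ((k+n) mod (2*n), Suc 0)"
  using inv_Q1 by simp

lemma carrier_Q_pos: "x \<in> carrier (Q n) \<Longrightarrow> n > 0"
  by (auto simp: carrier_Q)

lemma conj_refl: assumes "g \<in> carrier (Q n)" shows "conjugate (Q n) g g"
proof -
  have n: "n > 0" using carrier_Q_pos[OF assms] .
  obtain i j where g: "g = (i,j)" "i < 2*n" "j < 2" using assms by (cases g) (auto simp: carrier_Q)
  have inv: "inv\<^bsub>Q n\<^esub> (0,0) = (0,0)" using inv_Q0[of 0 n] n by simp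
  have "(0,0) \<otimes>\<^bsub>Q n\<^esub> g \<otimes>\<^bsub>Q n\<^esub> inv\<^bsub>Q n\<^esub> (0,0) = g"
    unfolding inv mult_Q using g by (auto simp: quat_mult_def)
  moreover have "(0::nat,0::nat) \<in> carrier (Q n)" using n by (simp add: carrier_Q)
  ultimately show ?thesis using assms unfolding conjugate_def by metis
qed

lemma conj_k0: assumes "k < 2*n" "m < 2*n"
  shows "(k,0) \<otimes>\<^bsub>Q n\<^esub> (m,1) \<otimes>\<^bsub>Q n\<^esub> inv\<^bsub>Q n\<^esub> (k,0) = ((2*k+m) mod (2*n), 1)"
  unfolding inv_Q0[OF assms(1)] mult_Q using assms
  by (auto simp: quat_mult_def mod_2m mod_3m)


lemma conj_k1: assumes "k < 2*n" "m < 2*n"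
  shows "(k,1) \<otimes>\<^bsub>Q n\<^esub> (m,1) \<otimes>\<^bsub>Q n\<^esub> inv\<^bsub>Q n\<^esub> (k,1) = ((2*k+2*n-m) mod (2*n), 1)"
proof -
  have "(k,1) \<otimes>\<^bsub>Q n\<^esub> (m,1) \<otimes>\<^bsub>Q n\<^esub> inv\<^bsub>Q n\<^esub> (k,1) =
     (((k+2*n-m+n) mod (2*n) + (k+n) mod (2*n)) mod (2*n), 1)"
    unfolding inv_Q1[OF assms(1)] mult_Q by (simp add: quat_mult_def)
  also have "\<dots> = ((k+2*n-m+n + (k+n)) mod (2*n), 1)" by (simp add: mod_add_eq)
  also have "k+2*n-m+n + (k+n) = (2*k+2*n-m) + 2*n" using assms by simp
  finally show ?thesis by simp
qed

lemma conj_k0_0: assumes "k < 2*n" "m < 2*n"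
  shows "(k,0) \<otimes>\<^bsub>Q n\<^esub> (m,0) \<otimes>\<^bsub>Q n\<^esub> inv\<^bsub>Q n\<^esub> (k,0) = (m, 0)"
  unfolding inv_Q0[OF assms(1)] mult_Q using assms
  by (auto simp: quat_mult_def mod_2m mod_3m)

lemma conj_k1_0: assumes "k < 2*n" "m < 2*n"
  shows "(k,1) \<otimes>\<^bsub>Q n\<^esub> (m,0) \<otimes>\<^bsub>Q n\<^esub> inv\<^bsub>Q n\<^esub> (k,1) = ((2*n-m) mod (2*n), 0)"
proof -
  define B where "B = (k+n) mod (2*n)"
  have B: "B < 2*n" using assms unfolding B_def by simp
  have "(k,1) \<otimes>\<^bsub>Q n\<^esub> (m,0) \<otimes>\<^bsub>Q n\<^esub> inv\<^bsub>Q n\<^esub> (k,1) =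
     (((k+2*n-m) mod (2*n) + (2*n - B) + n) mod (2*n), 0)"
    unfolding inv_Q1[OF assms(1)] mult_Q B_def[symmetric] using B by (simp add: quat_mult_def)
  also have "\<dots> = ((k+2*n-m + (2*n - B) + n) mod (2*n), 0)" by (metis add.assoc mod_add_left_eq)
  also have "(k+2*n-m + (2*n - B) + n) mod (2*n) = (2*n-m) mod (2*n)"
  proof (cases "k + n < 2*n")
    case True
    hence "B = k+n" unfolding B_def by simp
    hence "k+2*n-m + (2*n - B) + n = (2*n-m) + 2*n" using assms True by simp
    thus ?thesis by (metis mod_add_self2)
  next
    case False
    hence "B = k-n" unfolding B_def using assms by (simp add: mod_2m)
    hence "k+2*n-m + (2*n - B) + n = (2*n-m) + 2*n + 2*n" using assms False by simp
    thus ?thesis by (metis mod_add_self2)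
  qed
  finally show ?thesis by simp
qed

lemma conj_bwd: assumes "m < 2*n" "m' < 2*n" "even (m + m')"
  shows "conjugate (Q n) (m,1) (m',1)"
proof -
  define k where "k = (if m \<le> m' then (m' - m) div 2 else (m' + 2*n - m) div 2)"
  have k: "k < 2*n" using assms unfolding k_def by auto
  have k2: "2*k + m = (if m \<le> m' then m' else m' + 2*n)"
  proof (cases "m \<le> m'")
    case True
    have "even (m' - m)" using assms True by presburger
    then show ?thesis using True unfolding k_def by auto
  next
    case False
    have "even (m' + 2*n - m)" using assms False by presburger
    then show ?thesis using False assms unfolding k_def by auto
  qed
  have "(2*k+m) mod (2*n) = m'" using k2 assms by auto
  hence "(k,0) \<otimes>\<^bsub>Q n\<^esub> (m,1) \<otimes>\<^bsub>Q n\<^esub> inv\<^bsub>Q n\<^esub> (k,0) = (m',1)"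
    using conj_k0[OF k assms(1)] by simp
  moreover have "(k,0) \<in> carrier (Q n)" using k by (simp add: carrier_Q)
  moreover have "(m,1) \<in> carrier (Q n)" "(m',1) \<in> carrier (Q n)" using assms by (auto simp: carrier_Q)
  ultimately show ?thesis unfolding conjugate_def by metis
qed


lemma even_mod2n: "even ((a::nat) mod (2*n)) \<longleftrightarrow> even a"
  by (simp add: dvd_mod_iff)

lemma conj_fwd1:
  assumes "conjugate (Q n) g h" "snd g = 1"
  shows "snd h = 1 \<and> even (fst g + fst h)"
proof -
  obtain m where g: "g = (m,1)" "m < 2*n" using assms by (cases g) (auto simp: conjugate_def carrier_Q)
  from assms obtain x where x: "x \<in> carrier (Q n)" "h = x \<otimes>\<^bsub>Q n\<^esub> g \<otimes>\<^bsub>Q n\<^esub> inv\<^bsub>Q n\<^esub> x"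
    by (auto simp: conjugate_def)
  obtain k t where kt0: "x = (k,t)" "k < 2*n" "t < 2" using x by (cases x) (auto simp: carrier_Q)
  show ?thesis
  proof (cases "t = 0")
    case True
    hence h: "h = ((2*k+m) mod (2*n), 1)" using x kt0 g conj_k0 by simp
    have "even (m + (2*k+m))" by presburger
    then show ?thesis using h g by (simp add: even_mod2n)
  next
    case False
    hence "t = 1" using kt0 by simp
    hence h: "h = ((2*k+2*n-m) mod (2*n), 1)" using x kt0 g conj_k1 by simp
    have "even (m + (2*k+2*n-m))" using g by presburger
    then show ?thesis using h g by (simp add: even_mod2n)
  qed
qed

lemma conj_fwd0:
  assumes "conjugate (Q n) g h" "snd g = 0"
  shows "snd h = 0 \<and> (fst h = 0 \<longrightarrow> fst g = 0) \<and> (fst h = n \<longrightarrow> fst g = n)"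
proof -
  obtain m where g: "g = (m,0)" "m < 2*n" using assms by (cases g) (auto simp: conjugate_def carrier_Q)
  from assms obtain x where x: "x \<in> carrier (Q n)" "h = x \<otimes>\<^bsub>Q n\<^esub> g \<otimes>\<^bsub>Q n\<^esub> inv\<^bsub>Q n\<^esub> x"
    by (auto simp: conjugate_def)
  obtain k t where kt0: "x = (k,t)" "k < 2*n" "t < 2" using x by (cases x) (auto simp: carrier_Q)
  show ?thesis
  proof (cases "t = 0")
    case True
    hence h: "h = (m, 0)" using x kt0 g conj_k0_0 by simp
    then show ?thesis using g by simp
  next
    case False
    hence "t = 1" using kt0 by simp
    hence h: "h = ((2*n-m) mod (2*n), 0)" using x kt0 g conj_k1_0 by simp
    then show ?thesis using g by (auto simp: mod_2m)
  qed
qed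

definition Tset :: "nat \<Rightarrow> nat \<Rightarrow> (nat \<times> nat) set" where
  "Tset n r = {(0,0),(n,0),(r,1),(r+n,1)}"

lemma Tset_closed: assumes "r < n" "x \<in> Tset n r" "y \<in> Tset n r"
  shows "quat_mult n x y \<in> Tset n r"
  using assms by (auto simp: Tset_def quat_mult_def mod_2m mod_3m)

lemma in_Tset: assumes "k < 2*n" shows "(k,1) \<in> Tset n (k mod n)"
  using assms by (auto simp: Tset_def mod_2m)

lemma gen0: assumes "k < 2*n" shows "generate (Q n) {(k,0)} \<subseteq> {z. snd z = 0}"
proof
  fix z assume "z \<in> generate (Q n) {(k,0)}"
  then show "z \<in> {z. snd z = 0}"
  proof (induction rule: generate.induct)
    case one then show ?case by (simp add: one_Q)
  next
    case (incl h) then show ?case by auto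
  next
    case (inv h) then show ?case using inv_Q0[OF assms] by auto
  next
    case (eng h1 h2) then show ?case by (auto simp: mult_Q quat_mult_def split: prod.splits)
  qed
qed

lemma gen1: assumes "k < 2*n" shows "generate (Q n) {(k,1)} \<subseteq> Tset n (k mod n)"
proof
  have n: "k mod n < n" using assms by (intro mod_less_divisor) auto
  fix z assume "z \<in> generate (Q n) {(k,1)}"
  then show "z \<in> Tset n (k mod n)"
  proof (induction rule: generate.induct)
    case one then show ?case by (simp add: one_Q Tset_def)
  next
    case (incl h) then show ?case using in_Tset[OF assms] by auto
  next
    case (inv h) then show ?case using inv_Q1[OF assms] assms by (auto simp: Tset_def mod_2m)
  next
    case (eng h1 h2) then show ?case using Tset_closed[OF n] by (simp add: mult_Q)
  qed
qed

lemma power_adj_1: assumes "j < 2*n" "power_adj (Q n) (j,1) y"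
  shows "y \<in> Tset n (j mod n)"
proof -
  have y: "y \<in> carrier (Q n)" using assms(2) by (simp add: power_adj_def)
  obtain k b where kb: "y = (k,b)" "k < 2*n" "b < 2" using y by (cases y) (auto simp: carrier_Q)
  have "y \<in> generate (Q n) {(j,1)} \<or> (j,1) \<in> generate (Q n) {y}" using assms(2) unfolding power_adj_def by blast
  then show ?thesis
  proof
    assume "y \<in> generate (Q n) {(j,1)}" then show ?thesis using gen1[OF assms(1)] by auto
  next
    assume a: "(j,1) \<in> generate (Q n) {y}"
    show ?thesis
    proof (cases "b = 0")
      case True then show ?thesis using a gen0[OF kb(2)] kb by auto
    next
      case False
      hence b: "b = 1" using kb by auto
      have "(j,1) \<in> Tset n (k mod n)" using a gen1[OF kb(2)] kb b by auto
      hence "j mod n = k mod n" by (auto simp: Tset_def)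
      then show ?thesis using in_Tset[OF kb(2)] kb b by simp
    qed
  qed
qed

lemma nbr_fwd: assumes i: "i < 2*n" and adj: "csp_adj (Q n) (i,1) y"
  shows "y = (0,0) \<or> y = (n,0) \<or> (snd y = 1 \<and> (odd n \<or> even (i + fst y)))"
proof -
  have y: "y \<in> carrier (Q n)" using adj by (simp add: csp_adj_def)
  obtain a b where ab: "y = (a,b)" "a < 2*n" "b < 2" using y by (cases y) (auto simp: carrier_Q)
  from adj have "conjugate (Q n) (i,1) y \<or>
      (\<exists>g' h'. conjugate (Q n) (i,1) g' \<and> conjugate (Q n) y h' \<and> power_adj (Q n) g' h')"
    unfolding csp_adj_def by blast
  then show ?thesis
  proof
    assume "conjugate (Q n) (i,1) y"
    from conj_fwd1[OF this] show ?thesis by simp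
  next
    assume "\<exists>g' h'. conjugate (Q n) (i,1) g' \<and> conjugate (Q n) y h' \<and> power_adj (Q n) g' h'"
    then obtain g' h' where c1: "conjugate (Q n) (i,1) g'" and c2: "conjugate (Q n) y h'"
      and pa: "power_adj (Q n) g' h'" by blast
    from conj_fwd1[OF c1] obtain j where g': "g' = (j,1)" "even (i + j)" by (cases g') auto
    have j: "j < 2*n" using c1 g' by (auto simp: conjugate_def carrier_Q)
    have hT: "h' \<in> Tset n (j mod n)" using power_adj_1[OF j] pa g' by simp
    show ?thesis
    proof (cases "b = 0")
      case True
      from conj_fwd0[OF c2] True ab have "snd h' = 0" "fst h' = 0 \<longrightarrow> a = 0" "fst h' = n \<longrightarrow> a = n" by auto
      then show ?thesis using hT ab True by (auto simp: Tset_def)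
    next
      case False
      hence b: "b = 1" using ab by simp
      from conj_fwd1[OF c2] b ab have e: "snd h' = 1" "even (a + fst h')" by auto
      have "fst h' = j mod n \<or> fst h' = j mod n + n" using hT e by (auto simp: Tset_def)
      then have "odd n \<or> even (i + a)"
      proof (cases "even n")
        case True
        have jm: "even (j mod n) = even j" using True by (simp add: dvd_mod_iff)
        assume "fst h' = j mod n \<or> fst h' = j mod n + n"
        then have "even (a + j mod n)" using e True by auto
        then show ?thesis using jm g'(2) by (auto simp: even_add)
      qed simp
      then show ?thesis using ab b by simp
    qed
  qed
qed

lemma nbr: assumes i: "i < 2*n"
  shows "csp_adj (Q n) (i,1) y \<longleftrightarrow> y \<in> carrier (Q n) \<and> y \<noteq> (i,1) \<and>
           (y = (0,0) \<or> y = (n,0) \<or> (snd y = 1 \<and> (odd n \<or> even (i + fst y))))"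
proof
  assume "csp_adj (Q n) (i,1) y"
  then show "y \<in> carrier (Q n) \<and> y \<noteq> (i,1) \<and>
           (y = (0,0) \<or> y = (n,0) \<or> (snd y = 1 \<and> (odd n \<or> even (i + fst y))))"
    using nbr_fwd[OF i] by (auto simp: csp_adj_def)
next
  assume r: "y \<in> carrier (Q n) \<and> y \<noteq> (i,1) \<and>
           (y = (0,0) \<or> y = (n,0) \<or> (snd y = 1 \<and> (odd n \<or> even (i + fst y))))"
  have x: "(i,1) \<in> carrier (Q n)" using i by (simp add: carrier_Q)
  have cx: "conjugate (Q n) (i,1) (i,1)" by (rule conj_refl[OF x])
  obtain a b where ab: "y = (a,b)" "a < 2*n" "b < 2" using r by (cases y) (auto simp: carrier_Q)
  have gen_ok: "csp_adj (Q n) (i,1) y" if "y \<in> generate (Q n) {(i,1)}" 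
  proof -
    have "conjugate (Q n) y y" using conj_refl r by blast
    moreover have "power_adj (Q n) (i,1) y" using that r x unfolding power_adj_def by auto
    ultimately show ?thesis using cx r x unfolding csp_adj_def by blast
  qed
  consider "y = (0,0)" | "y = (n,0)" | "b = 1" "even (i + a)" | "b = 1" "odd n" "odd (i + a)"
    using r ab by auto
  then show "csp_adj (Q n) (i,1) y"
  proof cases
    case 1
    then show ?thesis using gen_ok generate.one[of "Q n" "{(i,1)}"] by (simp add: one_Q)
  next
    case 2
    have "(i,1) \<otimes>\<^bsub>Q n\<^esub> (i,1) \<in> generate (Q n) {(i,1)}"
      by (intro generate.eng generate.incl) auto
    moreover have "(i,1) \<otimes>\<^bsub>Q n\<^esub> (i,1) = (n,0)" using i by (simp add: mult_Q quat_mult_def mod_3m)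
    ultimately show ?thesis using gen_ok 2 by simp
  next
    case 3
    then have "conjugate (Q n) (i,1) y" using conj_bwd[OF i ab(2)] ab by simp
    then show ?thesis using r x unfolding csp_adj_def by blast
  next
    case 4
    define y' where "y' = ((i+n) mod (2*n), 1::nat)"
    have "y' \<in> generate (Q n) {(i,1)}" unfolding y'_def using generate.inv[of "(i,1)" "{(i,1)}" "Q n"] inv_Q1[OF i] by simp
    moreover have "y' \<noteq> (i,1)" using 4 i unfolding y'_def by (auto simp: mod_2m)
    moreover have "y' \<in> carrier (Q n)" using i unfolding y'_def by (simp add: carrier_Q)
    ultimately have pa: "power_adj (Q n) (i,1) y'" using x unfolding power_adj_def by auto
    have "even (a + (i+n) mod (2*n))" using 4 by (simp add: even_mod2n)
    hence "conjugate (Q n) y y'" using conj_bwd[OF ab(2), of "(i+n) mod (2*n)"] ab 4 i unfolding y'_def by simp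
    then show ?thesis using cx pa r x unfolding csp_adj_def by blast
  qed
qed

definition Clq :: "nat \<Rightarrow> nat \<Rightarrow> (nat \<times> nat) set" where
  "Clq n i = {y \<in> carrier (Q n). snd y = 1 \<and> (odd n \<or> even (i + fst y))}"

lemma parity_shift: "even ((i::nat) + i') \<Longrightarrow> even (i' + a) = even (i + a)" by presburger

lemma clq_nbr: assumes x: "x \<in> Clq n i"
  shows "{w \<in> carrier (Q n). csp_adj (Q n) x w} = (Clq n i - {x}) \<union> {(0,0),(n,0)}"
proof -
  obtain i' where x': "x = (i',1)" "i' < 2*n" "odd n \<or> even (i + i')"
    using x unfolding Clq_def carrier_Q by (cases x) auto
  have n: "n > 0" using x' by simp
  have par: "odd n \<or> even (i' + a) = even (i + a)" for a using x'(3) parity_shift by blast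
  show ?thesis
  proof (rule Set.set_eqI)
    fix w
    show "w \<in> {w \<in> carrier (Q n). csp_adj (Q n) x w} \<longleftrightarrow> w \<in> (Clq n i - {x}) \<union> {(0,0),(n,0)}"
      unfolding x'(1) nbr[OF x'(2)] Clq_def using par n x'
      by (cases w) (auto simp: carrier_Q)
  qed
qed

lemma card_clq: assumes "n > 0" shows "card (Clq n i) = (if odd n then 2*n else n)"
proof -
  have eq: "Clq n i = (\<lambda>m. (m, 1::nat)) ` {m \<in> {0..<2*n}. odd n \<or> even (i + m)}"
    unfolding Clq_def carrier_Q by auto
  have "card (Clq n i) = card {m \<in> {0..<2*n}. odd n \<or> even (i + m)}"
    unfolding eq by (rule card_image) (auto simp: inj_on_def)
  also have "\<dots> = (if odd n then 2*n else n)"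
  proof (cases "odd n")
    case True then show ?thesis by simp
  next
    case False
    have "{m \<in> {0..<2*n}. even (i + m)} = (\<lambda>t. 2*t + i mod 2) ` {0..<n}"
    proof (rule Set.set_eqI, rule iffI)
      fix m assume "m \<in> {m \<in> {0..<2*n}. even (i + m)}"
      hence m: "m < 2*n" "even (i+m)" by auto
      have "m = 2*(m div 2) + i mod 2" "m div 2 < n" using m by presburger+
      then show "m \<in> (\<lambda>t. 2*t + i mod 2) ` {0..<n}" by (metis atLeastLessThan_iff image_eqI zero_le)
    next
      fix m assume "m \<in> (\<lambda>t. 2*t + i mod 2) ` {0..<n}"
      then obtain t where "t < n" "m = 2*t + i mod 2" by auto
      then show "m \<in> {m \<in> {0..<2*n}. even (i + m)}" by auto
    qed
    moreover have "card ((\<lambda>t. 2*t + i mod 2) ` {0..<n}) = n"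
      by (subst card_image) (auto simp: inj_on_def)
    ultimately show ?thesis using False by simp
  qed
  finally show ?thesis .
qed

lemma clq_deg: assumes x: "x \<in> Clq n i"
  shows "graph_deg (carrier (Q n)) (csp_adj (Q n)) x = card (Clq n i) + 1"
proof -
  have n: "n > 0" using x unfolding Clq_def carrier_Q by auto
  have fin: "finite (Clq n i)" unfolding Clq_def carrier_Q
    by (rule finite_subset[of _ "{0..<2*n} \<times> {0..<2}"]) auto
  have dis: "(Clq n i - {x}) \<inter> {(0,0),(n,0)} = {}" unfolding Clq_def by auto
  have c1: "card (Clq n i) > 0" using fin x by (auto simp: card_gt_0_iff)
  have a: "card ((Clq n i - {x}) \<union> {(0,0),(n,0)}) = card (Clq n i - {x}) + card {(0::nat,0::nat),(n,0)}"
    using fin dis by (intro card_Un_disjoint) auto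
  have b: "card {(0::nat,0::nat),(n,0)} = 2" using n by simp
  have c: "card (Clq n i - {x}) = card (Clq n i) - 1" using fin x by simp
  have "card ((Clq n i - {x}) \<union> {(0,0),(n,0)}) = card (Clq n i) + 1" using a b c c1 by linarith
  then show ?thesis unfolding graph_deg_def clq_nbr[OF x] .
qed

lemma clq_twin: "twin_clique (carrier (Q n)) (csp_adj (Q n)) (Clq n i)"
proof -
  have sub: "Clq n i \<subseteq> carrier (Q n)" unfolding Clq_def by auto
  have E: "csp_adj (Q n) x y \<longleftrightarrow> y \<in> carrier (Q n) \<and> y \<noteq> x \<and> (y \<in> Clq n i \<or> y \<in> {(0,0),(n,0)})"
    if "x \<in> Clq n i" for x y
  proof -
    have "y \<in> {w \<in> carrier (Q n). csp_adj (Q n) x w} \<longleftrightarrow> y \<in> (Clq n i - {x}) \<union> {(0,0),(n,0)}"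
      unfolding clq_nbr[OF that] ..
    moreover have "y \<in> {w \<in> carrier (Q n). csp_adj (Q n) x w} \<longleftrightarrow> y \<in> carrier (Q n) \<and> csp_adj (Q n) x y"
      by simp
    moreover have "csp_adj (Q n) x y \<Longrightarrow> y \<in> carrier (Q n) \<and> y \<noteq> x" unfolding csp_adj_def by auto
    ultimately show ?thesis using sub by blast
  qed
  have "\<forall>x\<in>Clq n i. \<not> csp_adj (Q n) x x" by (simp add: csp_adj_def)
  moreover have "\<forall>x\<in>Clq n i. \<forall>x'\<in>Clq n i. x \<noteq> x' \<longrightarrow> csp_adj (Q n) x x'"
    using sub by (auto simp: E)
  moreover have "\<forall>x\<in>Clq n i. \<forall>x'\<in>Clq n i. \<forall>y. y \<noteq> x \<longrightarrow> y \<noteq> x' \<longrightarrow>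
      (csp_adj (Q n) x y \<longleftrightarrow> csp_adj (Q n) x' y)"
    by (simp add: E)
  ultimately show ?thesis unfolding twin_clique_def using sub by blast
qed

lemma sqrt_dd: "sqrt (real d ^ 2 + real d ^ 2) = real d * sqrt 2"
proof -
  have "real d ^ 2 + real d ^ 2 = real d ^ 2 * 2" by simp
  thus ?thesis by (simp add: real_sqrt_mult)
qed

lemma final_step:
  fixes S :: "real mat"
  assumes S: "S \<in> carrier_mat N N" and dv: "[: c, 1:] ^ k dvd char_poly S" and k: "k \<ge> 1"
  shows "eigenvalue S (- c) \<and> Polynomial.order (- c) (char_poly S) \<ge> k"
proof -
  have nz: "char_poly S \<noteq> 0" using degree_monic_char_poly[OF S] by auto
  have o: "k \<le> Polynomial.order (- c) (char_poly S)" using dv nz order_divides[of "-c" k] by simp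
  hence "Polynomial.order (- c) (char_poly S) \<noteq> 0" using k by linarith
  hence "poly (char_poly S) (- c) = 0" by (simp add: order_root)
  thus ?thesis using o eigenvalue_root_char_poly[OF S] by simp
qed

theorem theorem6p10:
  fixes n :: nat and u :: "nat \<Rightarrow> nat \<times> nat"
  assumes "n \<ge> 2"
    and "bij_betw u {0..<4 * n} (carrier (Q n))"
  defines "S \<equiv> sombor_matrix (carrier (Q n)) (csp_adj (Q n)) (4 * n) u"
  shows "(even n \<longrightarrow>
            eigenvalue S (- (real n + 1) * sqrt 2) \<and>
            order (- (real n + 1) * sqrt 2) (char_poly S) \<ge> 2 * n - 2) \<and>
         (odd n \<longrightarrow>
            eigenvalue S (- (2 * real n + 1) * sqrt 2) \<and>
            order (- (2 * real n + 1) * sqrt 2) (char_poly S) \<ge> 2 * n - 1)"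
proof -
  have n: "n > 0" using assms(1) by simp
  have Sc: "S \<in> carrier_mat (4*n) (4*n)" unfolding S_def sombor_matrix_def by simp
  have ev: ?thesis if en: "even n"
  proof -
    have d: "graph_deg (carrier (Q n)) (csp_adj (Q n)) x = n + 1" if "x \<in> Clq n 0 \<union> Clq n 1" for x
      using that clq_deg[of x n 0] clq_deg[of x n 1] card_clq[OF n] en by auto
    have dj: "Clq n 0 \<inter> Clq n 1 = {}" using en unfolding Clq_def by auto
    have "[: sqrt (real (n+1) ^ 2 + real (n+1) ^ 2), 1:] ^ (card (Clq n 0) - 1 + (card (Clq n 1) - 1))
        dvd char_poly S"
      unfolding S_def by (rule two_cliques[OF assms(2) clq_twin clq_twin dj d])
    moreover have "sqrt (real (n+1) ^ 2 + real (n+1) ^ 2) = (real n + 1) * sqrt 2"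
      using sqrt_dd[of "n+1"] by simp
    moreover have "card (Clq n 0) - 1 + (card (Clq n 1) - 1) = 2*n - 2" using card_clq[OF n] en by simp
    ultimately have "[: (real n + 1) * sqrt 2, 1:] ^ (2*n - 2) dvd char_poly S" by simp
    from final_step[OF Sc this] assms(1)
    have fs: "eigenvalue S (-((real n + 1) * sqrt 2)) \<and> 2*n-2 \<le> Polynomial.order (-((real n + 1) * sqrt 2)) (char_poly S)"
      by simp
    have m: "-((real n + 1) * sqrt 2) = - (real n + 1) * sqrt 2" by (simp only: minus_mult_left)
    show ?thesis using fs en unfolding m by simp
  qed
  have od: ?thesis if on: "odd n"
  proof -
    have d: "graph_deg (carrier (Q n)) (csp_adj (Q n)) x = 2*n + 1" if "x \<in> Clq n 0 \<union> {}" for x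
      using that clq_deg[of x n 0] card_clq[OF n] on by auto
    have t0: "twin_clique (carrier (Q n)) (csp_adj (Q n)) {}" unfolding twin_clique_def by simp
    have "[: sqrt (real (2*n+1) ^ 2 + real (2*n+1) ^ 2), 1:] ^ (card (Clq n 0) - 1 + (card ({}::(nat\<times>nat) set) - 1))
        dvd char_poly S"
      unfolding S_def by (rule two_cliques[OF assms(2) clq_twin t0 _ d]) simp
    moreover have "sqrt (real (2*n+1) ^ 2 + real (2*n+1) ^ 2) = (2 * real n + 1) * sqrt 2"
      using sqrt_dd[of "2*n+1"] by simp
    moreover have "card (Clq n 0) - 1 + (card ({}::(nat\<times>nat) set) - 1) = 2*n - 1" using card_clq[OF n] on by simp
    ultimately have "[: (2 * real n + 1) * sqrt 2, 1:] ^ (2*n - 1) dvd char_poly S" by simp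
    from final_step[OF Sc this] assms(1)
    have fs: "eigenvalue S (-((2 * real n + 1) * sqrt 2)) \<and> 2*n-1 \<le> Polynomial.order (-((2 * real n + 1) * sqrt 2)) (char_poly S)"
      by simp
    have m: "-((2 * real n + 1) * sqrt 2) = - (2 * real n + 1) * sqrt 2" by (simp only: minus_mult_left)
    show ?thesis using fs on unfolding m by simp
  qed
  show ?thesis using ev od by blast
qed

end
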